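(* For every positive integer $n$, $$\sum_{r=1}^{n-1}\frac{(-1)^rB_r}{r}\left(\frac{1}{n}\sum_{l=r}^{n}(-1)^l\binom{n}{l}H_{l-1}+\frac{1}{r(n-r)}\right)=\frac{H_{n-1}^{(2)}}{n}+\frac{H_{n-1}}{n^2}.$$
   Context: The Bernoulli numbers $B_n$ are defined by $\sum_{n=0}^\infty \frac{B_n}{n!}t^n=\frac{t}{e^t-1}$ (so $B_1=-\tfrac12$). For $m\ge 0$, $H_m=\sum_{k=1}^m \frac1k$ and $H_m^{(2)}=\sum_{k=1}^m\frac1{k^2}$ (empty sums are $0$, so $H_0=H_0^{(2)}=0$). *)

theory Defs
  imports "HOL-Analysis.Analysis" "HOL-Computational_Algebra.Formal_Power_Series"
begin

text \<open>Bernoulli numbers via the exponential generating function t/(e^t - 1)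
  (as a formal power series over the rationals/reals), so B 1 = -1/2.\<close>
definition bernoulli_num :: "nat \<Rightarrow> real" where
  "bernoulli_num n = fact n * fps_nth (fps_X / (fps_exp 1 - 1)) n"

definition H1 :: "nat \<Rightarrow> real" where
  "H1 m = (\<Sum>k=1..m. 1 / real k)"

definition H2 :: "nat \<Rightarrow> real" where
  "H2 m = (\<Sum>k=1..m. 1 / (real k)^2)"

end

theory Submission
  imports Defs
begin

abbreviation "EB \<equiv> (fps_X / (fps_exp 1 - 1) :: real fps)"

lemma EB_mult: "EB * (fps_exp 1 - 1) = fps_X"
proof -
  let ?g = "fps_exp (1::real) - 1"
  have g1: "fps_nth ?g 1 = 1" by simp
  have g0: "fps_nth ?g 0 = 0" by simp
  have gnz: "?g \<noteq> 0" using g1 by (metis fps_zero_nth zero_neq_one)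
  have sd: "subdegree ?g = 1"
    by (rule subdegreeI) (use g1 g0 in auto)
  have "?g dvd fps_X" using fps_dvd_iff[OF gnz] sd by simp
  then show ?thesis by (rule dvd_div_mult_self)
qed

lemma EB_nth: "fps_nth EB i = bernoulli_num i / fact i"
  by (simp add: bernoulli_num_def)

lemma bern_rec:
  assumes "m \<ge> 1"
  shows "(\<Sum>r<m. real (m choose r) * bernoulli_num r) = (if m = 1 then 1 else 0)"
proof -
  have "fps_nth (EB * (fps_exp 1 - 1)) m = (\<Sum>i=0..m. fps_nth EB i * fps_nth (fps_exp 1 - 1) (m - i))"
    by (rule fps_mult_nth)
  also have "\<dots> = (\<Sum>i<m. fps_nth EB i / fact (m - i))"
  proof -
    have "(\<Sum>i=0..m. fps_nth EB i * fps_nth (fps_exp 1 - 1) (m - i)) = (\<Sum>i\<in>{..<m}. fps_nth EB i * fps_nth (fps_exp 1 - 1) (m - i))"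
      using assms by (intro sum.mono_neutral_right) auto
    also have "\<dots> = (\<Sum>i<m. fps_nth EB i / fact (m - i))"
      by (intro sum.cong) auto
    finally show ?thesis .
  qed
  finally have "(\<Sum>i<m. fps_nth EB i / fact (m - i)) = (if m = 1 then 1 else 0)"
    using EB_mult by (simp add: fps_X_def)
  then have "fact m * (\<Sum>i<m. fps_nth EB i / fact (m - i)) = (if m = 1 then 1 else 0)"
    by auto
  moreover have "fact m * (\<Sum>i<m. fps_nth EB i / fact (m - i)) = (\<Sum>r<m. real (m choose r) * bernoulli_num r)"
    unfolding sum_distrib_left
    by (intro sum.cong refl) (simp add: EB_nth binomial_fact field_simps)
  ultimately show ?thesis by simp
qed

lemma bern_refl: "(-1)^n * bernoulli_num n = bernoulli_num n + (if n = 1 then 1 else 0)"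
proof -
  let ?g = "fps_exp (1::real) - 1"
  let ?c = "-fps_X :: real fps"
  have c0: "fps_nth ?c 0 = 0" by simp
  have "(EB * ?g) oo ?c = (EB oo ?c) * (?g oo ?c)"
    by (rule fps_compose_mult_distrib[OF c0])
  then have e1: "(EB oo ?c) * (fps_exp (-1) - 1) = - fps_X"
    using EB_mult by (simp add: fps_compose_sub_distrib fps_compose_uminus)
  have inv: "fps_exp (-1) * fps_exp (1::real) = 1"
    by (simp flip: fps_exp_add_mult)
  have "(EB oo ?c) * (1 - fps_exp 1) = (EB oo ?c) * (fps_exp (-1) - 1) * fps_exp 1"
    using inv by (simp add: right_diff_distrib left_diff_distrib mult.assoc)
  also have "\<dots> = - fps_X * fps_exp 1" using e1 by simp
  finally have "(EB oo ?c) * (1 - fps_exp 1) = - fps_X * fps_exp 1" .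
  then have e2: "(EB oo ?c) * ?g = fps_X * fps_exp 1"
    by (simp add: algebra_simps)
  have e3: "(EB + fps_X) * ?g = fps_X * fps_exp 1"
    using EB_mult by (simp add: algebra_simps)
  have gnz: "?g \<noteq> 0" by (metis fps_zero_nth zero_neq_one fps_exp_nth diff_zero fps_one_nth fps_sub_nth
        power_one fact_1 div_by_1 of_nat_1 one_neq_zero)
  have "EB oo ?c = EB + fps_X"
    using e2 e3 gnz by (metis mult_right_cancel)
  then have "fps_nth (EB oo ?c) n = fps_nth (EB + fps_X) n" by simp
  then have "(-1)^n * fps_nth EB n = fps_nth EB n + (if n = 1 then 1 else 0)"
    by (simp only: fps_compose_uminus' fps_nth_Abs_fps fps_add_nth fps_X_nth)
  then have "fact n * ((-1)^n * fps_nth EB n) = fact n * (fps_nth EB n + (if n = 1 then 1 else 0))" by simp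
  then show ?thesis by (auto simp: EB_nth algebra_simps)
qed

lemma bern0: "bernoulli_num 0 = 1"
  using bern_rec[of 1] by simp

definition bb :: "nat \<Rightarrow> real" where "bb r = (-1)^r * bernoulli_num r"

lemma bb0: "bb 0 = 1" by (simp add: bb_def bern0)

lemma F1: "(\<Sum>r=0..M. real (M choose r) * bernoulli_num r) = bb M"
proof (cases "M = 0")
  case True then show ?thesis by (simp add: bb_def bern0)
next
  case False
  have "{0..M} = insert M {..<M}" by auto
  then have "(\<Sum>r=0..M. real (M choose r) * bernoulli_num r)
      = bernoulli_num M + (\<Sum>r<M. real (M choose r) * bernoulli_num r)" by simp
  also have "\<dots> = bb M" using bern_rec[of M] False bern_refl[of M] by (simp add: bb_def)
  finally show ?thesis .
qed

lemma F1': assumes "M \<le> N" shows "(\<Sum>r=1..N. real (M choose r) * bernoulli_num r) = bb M - 1"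
proof -
  have "(\<Sum>r=1..N. real (M choose r) * bernoulli_num r) = (\<Sum>r=1..M. real (M choose r) * bernoulli_num r)"
    using assms by (intro sum.mono_neutral_right) auto
  moreover have "(\<Sum>r=0..M. real (M choose r) * bernoulli_num r) = 1 + (\<Sum>r=1..M. real (M choose r) * bernoulli_num r)"
    by (simp add: sum.atLeast_Suc_atMost bern0)
  ultimately show ?thesis using F1[of M] by simp
qed

lemma H1_0 [simp]: "H1 0 = 0" by (simp add: H1_def)
lemma H1_Suc: "H1 (Suc m) = H1 m + 1 / real (Suc m)" by (simp add: H1_def)
lemma H2_Suc: "H2 (Suc m) = H2 m + 1 / (real (Suc m))^2" by (simp add: H2_def)

lemma I2: assumes "k \<ge> 1" shows "real (n choose k) / k = (\<Sum>j=1..n. real (j choose k) / j)"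
proof (induction n)
  case 0 then show ?case using assms by simp
next
  case (Suc n)
  obtain k' where k: "k = Suc k'" using assms by (cases k) auto
  have e: "real (Suc n) * real (n choose k') = real (Suc n choose k) * real k"
    using Suc_times_binomial_eq[of n k'] k by (metis of_nat_mult)
  have "real (Suc n choose k) / k = real (n choose k) / k + real (n choose k') / k"
    by (simp add: k add_divide_distrib)
  also have "real (n choose k') / k = real (Suc n choose k) / real (Suc n)"
    using e k by (simp add: field_simps)
  finally show ?case using Suc by simp
qed

lemma I1: "(\<Sum>m<n. real (m choose k) / real (n - m)) = real (n choose k) * (H1 n - H1 k)"
proof (induction n arbitrary: k)
  case 0 then show ?case by (cases k) auto
next
  case (Suc n)
  have sh: "(\<Sum>m<Suc n. real (m choose k) / real (Suc n - m))
     = real (0 choose k) / real (Suc n) + (\<Sum>m<n. real (Suc m choose k) / real (n - m))"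
    by (subst sum.lessThan_Suc_shift) simp
  show ?case
  proof (cases k)
    case 0
    then show ?thesis using sh Suc[of 0] by (simp add: H1_Suc)
  next
    case (Suc k')
    have "(\<Sum>m<n. real (Suc m choose k) / real (n - m))
        = (\<Sum>m<n. real (m choose k') / real (n - m)) + (\<Sum>m<n. real (m choose k) / real (n - m))"
      by (simp add: Suc sum.distrib add_divide_distrib)
    also have "\<dots> = real (n choose k') * (H1 n - H1 k') + real (n choose k) * (H1 n - H1 k)"
      using Suc.IH by simp
    finally have s1: "(\<Sum>m<Suc n. real (m choose k) / real (Suc n - m)) = real (n choose k') * (H1 n - H1 k') + real (n choose k) * (H1 n - H1 k)"
      using sh Suc by simp
    have pas: "real (Suc n choose k) = real (n choose k') + real (n choose k)" using Suc by simp
    have e: "real (Suc n) * real (n choose k') = real (Suc n choose k) * real k"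
      using Suc_times_binomial_eq[of n k'] Suc by (metis of_nat_mult)
    have hk: "H1 k = H1 k' + 1 / real k" using Suc by (simp add: H1_Suc)
    have "real (Suc n choose k) * (H1 (Suc n) - H1 k)
       = real (Suc n choose k) * (H1 n - H1 k') + real (Suc n choose k) / real (Suc n) - real (Suc n choose k) / real k"
      using hk by (simp add: H1_Suc algebra_simps)
    also have "real (Suc n choose k) / real (Suc n) = real (n choose k') / real k"
      using e Suc by (simp add: field_simps)
    finally show ?thesis using s1 pas hk by (simp add: algebra_simps add_divide_distrib)
  qed
qed

lemma X_step:
  "real (N choose q) * H1 q - (\<Sum>M=1..N. real ((M-1) choose q) / real M)
   + (real (N choose Suc q) * H1 (Suc q) - (\<Sum>M=1..N. real ((M-1) choose Suc q) / real M))
   = real (Suc N choose Suc q) * H1 q"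
proof -
  have "(\<Sum>M=1..N. real ((M-1) choose q) / real M) + (\<Sum>M=1..N. real ((M-1) choose Suc q) / real M)
      = (\<Sum>M=1..N. real (M choose Suc q) / real M)"
    unfolding sum.distrib[symmetric]
  proof (intro sum.cong refl)
    fix M assume "M \<in> {1..N}"
    then obtain M' where M: "M = Suc M'" by (cases M) auto
    show "real ((M-1) choose q) / real M + real ((M-1) choose Suc q) / real M = real (M choose Suc q) / real M"
      by (simp add: M add_divide_distrib[symmetric])
  qed
  also have "\<dots> = real (N choose Suc q) / real (Suc q)" using I2[of "Suc q" N] by simp
  finally have e: "(\<Sum>M=1..N. real ((M-1) choose q) / real M) + (\<Sum>M=1..N. real ((M-1) choose Suc q) / real M)
      = real (N choose Suc q) / real (Suc q)" .
  show ?thesis using e by (simp add: H1_Suc algebra_simps)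
qed

lemma S_closed:
  assumes "1 \<le> r" "r \<le> Suc (Suc N)"
  shows "(\<Sum>l=r..Suc N. (-1)^l * real (Suc N choose l) * H1 (l - 1))
     = (-1)^r * (real (N choose (r-1)) * H1 (r-1) - (\<Sum>M=1..N. real ((M-1) choose (r-1)) / real M))"
  using assms(2,1)
proof (induction r rule: inc_induct)
  case base
  have "(\<Sum>M=1..N. real ((M-1) choose Suc N) / real M) = 0"
    by (intro sum.neutral) auto
  then show ?case by simp
next
  case (step r)
  then obtain q where r: "r = Suc q" by (cases r) auto
  define Xq where "Xq = real (N choose q) * H1 q - (\<Sum>M=1..N. real ((M-1) choose q) / real M)"
  define Xs where "Xs = real (N choose Suc q) * H1 (Suc q) - (\<Sum>M=1..N. real ((M-1) choose Suc q) / real M)"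
  define T where "T = (\<Sum>l=Suc r..Suc N. (-1)^l * real (Suc N choose l) * H1 (l - 1))"
  have xs: "Xq + Xs = real (Suc N choose r) * H1 q" using X_step[of N q] by (simp add: Xq_def Xs_def r)
  define L where "L = (\<Sum>l=r..Suc N. (-1)^l * real (Suc N choose l) * H1 (l - 1))"
  have l1: "L = (-1)^r * real (Suc N choose r) * H1 (r - 1) + T"
    unfolding T_def L_def by (rule sum.atLeast_Suc_atMost) (use step in simp)
  have t1: "T = (-1)^(Suc r) * Xs"
    using step unfolding T_def Xs_def by (simp add: r)
  have xq: "Xq = real (Suc N choose r) * H1 q - Xs" using xs by simp
  have "L = (-1)^r * Xq"
    unfolding xq using l1 t1 by (simp add: r algebra_simps)
  then show ?case by (simp add: L_def Xq_def r)
qed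

lemma Hsum_rev: "(\<Sum>m<n. 1 / real (n - m)) = H1 n"
  using I1[where n=n and k=0] by (simp only: binomial_n_0 of_nat_1 H1_0 diff_zero mult_1)

lemma L_A:
  "(\<Sum>k=1..n. bernoulli_num k * real (n choose k) * H1 (k-1))
   = H1 n * bb n + H1 n - (\<Sum>m<n. bb m / real (n - m)) - (\<Sum>j=1..n. bb j / real j)"
proof -
  define D where "D k = (\<Sum>m<n. real (m choose k) / real (n - m))" for k
  define E where "E k = (\<Sum>j=1..n. real (j choose k) / real j)" for k
  have pk: "real (n choose k) * H1 (k-1) = real (n choose k) * H1 n - D k - E k" if kin: "k \<in> {1..n}" for k
  proof -
    obtain k' where k: "k = Suc k'" using kin by (cases k) auto
    have "D k = real (n choose k) * (H1 n - H1 k)" unfolding D_def by (rule I1)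
    moreover have "E k = real (n choose k) / k" unfolding E_def using I2[of k n] k by simp
    moreover have "H1 k = H1 (k-1) + 1 / real k" using k by (simp add: H1_Suc)
    ultimately show ?thesis by (simp add: algebra_simps)
  qed
  have "(\<Sum>k=1..n. bernoulli_num k * real (n choose k) * H1 (k-1))
      = (\<Sum>k=1..n. H1 n * (real (n choose k) * bernoulli_num k) - bernoulli_num k * D k - bernoulli_num k * E k)"
  proof (intro sum.cong refl)
    fix k assume kin: "k \<in> {1..n}"
    have "bernoulli_num k * (real (n choose k) * H1 (k-1)) = bernoulli_num k * (real (n choose k) * H1 n - D k - E k)"
      using pk[OF kin] by simp
    then show "bernoulli_num k * real (n choose k) * H1 (k-1) = H1 n * (real (n choose k) * bernoulli_num k) - bernoulli_num k * D k - bernoulli_num k * E k"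
      by (simp add: algebra_simps)
  qed
  also have "\<dots> = H1 n * (\<Sum>k=1..n. real (n choose k) * bernoulli_num k)
        - (\<Sum>k=1..n. bernoulli_num k * D k) - (\<Sum>k=1..n. bernoulli_num k * E k)"
    by (simp add: sum_subtractf sum_distrib_left)
  also have "(\<Sum>k=1..n. real (n choose k) * bernoulli_num k) = bb n - 1"
    by (rule F1') simp
  also have "(\<Sum>k=1..n. bernoulli_num k * D k) = (\<Sum>m<n. (bb m - 1) / real (n - m))"
  proof -
    have "(\<Sum>k=1..n. bernoulli_num k * D k) = (\<Sum>m<n. (\<Sum>k=1..n. real (m choose k) * bernoulli_num k) / real (n - m))"
      unfolding D_def sum_distrib_left sum_divide_distrib
      by (subst sum.swap) (simp add: algebra_simps)
    also have "\<dots> = (\<Sum>m<n. (bb m - 1) / real (n - m))"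
      by (intro sum.cong refl) (metis F1' lessThan_iff atLeastAtMost_iff less_imp_le)
    finally show ?thesis .
  qed
  also have "(\<Sum>k=1..n. bernoulli_num k * E k) = (\<Sum>j=1..n. (bb j - 1) / real j)"
  proof -
    have "(\<Sum>k=1..n. bernoulli_num k * E k) = (\<Sum>j=1..n. (\<Sum>k=1..n. real (j choose k) * bernoulli_num k) / real j)"
      unfolding E_def sum_distrib_left sum_divide_distrib
      by (subst sum.swap) (simp add: algebra_simps)
    also have "\<dots> = (\<Sum>j=1..n. (bb j - 1) / real j)"
      by (intro sum.cong refl) (metis F1' lessThan_iff atLeastAtMost_iff less_imp_le)
    finally show ?thesis .
  qed
  also have "(\<Sum>m<n. (bb m - 1) / real (n - m)) = (\<Sum>m<n. bb m / real (n - m)) - H1 n"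
    using Hsum_rev[of n] by (simp add: diff_divide_distrib sum_subtractf)
  also have "(\<Sum>j=1..n. (bb j - 1) / real j) = (\<Sum>j=1..n. bb j / real j) - H1 n"
    by (simp add: diff_divide_distrib sum_subtractf H1_def)
  finally show ?thesis by (simp add: algebra_simps)
qed

lemma step2:
  "(\<Sum>r=1..N. bernoulli_num r * real (Suc N choose r) * H1 (r-1))
   + (\<Sum>r=1..N. bb r / real r) + (\<Sum>r=1..N. bb r / real (Suc N - r)) = H1 N"
proof -
  have a: "(\<Sum>k=1..Suc N. bernoulli_num k * real (Suc N choose k) * H1 (k-1))
     = (\<Sum>r=1..N. bernoulli_num r * real (Suc N choose r) * H1 (r-1)) + bernoulli_num (Suc N) * H1 N"
    by simp
  have "{..<Suc N} = insert 0 {1..N}" by auto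
  then have b: "(\<Sum>m<Suc N. bb m / real (Suc N - m)) = 1 / real (Suc N) + (\<Sum>r=1..N. bb r / real (Suc N - r))"
    by (simp add: bb0)
  have c: "(\<Sum>j=1..Suc N. bb j / real j) = (\<Sum>r=1..N. bb r / real r) + bb (Suc N) / real (Suc N)"
    by simp
  have d: "bb (Suc N) = bernoulli_num (Suc N) + (if N = 0 then 1 else 0)"
    using bern_refl[of "Suc N"] by (simp add: bb_def)
  have "H1 (Suc N) = H1 N + 1 / real (Suc N)" by (rule H1_Suc)
  then show ?thesis using L_A[of "Suc N"] a b c d
    by (cases "N = 0") (auto simp: algebra_simps)
qed

lemma Gsum:
  "(\<Sum>r=1..N. bernoulli_num r * (\<Sum>M=1..N. real ((M-1) choose (r-1)) / real M) / real r)
   = (\<Sum>r=1..N. bb r / (real r)^2) - H2 N"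
proof -
  have "(\<Sum>r=1..N. bernoulli_num r * (\<Sum>M=1..N. real ((M-1) choose (r-1)) / real M) / real r)
      = (\<Sum>r=1..N. \<Sum>M=1..N. bernoulli_num r * (real ((M-1) choose (r-1)) / real M) / real r)"
    by (simp add: sum_distrib_left sum_divide_distrib)
  also have "\<dots> = (\<Sum>M=1..N. \<Sum>r=1..N. real (M choose r) * bernoulli_num r / (real M)^2)"
  proof (subst sum.swap, intro sum.cong refl)
    fix M r assume M: "M \<in> {1..N}" and r: "r \<in> {1..N}"
    obtain M' where M': "M = Suc M'" using M by (cases M) auto
    obtain r' where r': "r = Suc r'" using r by (cases r) auto
    have e: "real (Suc M') * real (M' choose r') = real (Suc M' choose Suc r') * real (Suc r')"
      using Suc_times_binomial_eq[of M' r'] by (metis of_nat_mult)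
    show "bernoulli_num r * (real ((M-1) choose (r-1)) / real M) / real r = real (M choose r) * bernoulli_num r / (real M)^2"
    proof -
      have key: "\<And>a b x y c::real. x > 0 \<Longrightarrow> y > 0 \<Longrightarrow> x * a = b * y \<Longrightarrow> c * (a / x) / y = b * c / x^2"
        by (simp add: field_simps power2_eq_square)
      show ?thesis unfolding M' r' diff_Suc_1 by (rule key) (use e in simp_all)
    qed
  qed
  also have "\<dots> = (\<Sum>M=1..N. (bb M - 1) / (real M)^2)"
  proof (intro sum.cong refl)
    fix M assume M: "M \<in> {1..N}"
    have "(\<Sum>r=1..N. real (M choose r) * bernoulli_num r / (real M)^2) = (\<Sum>r=1..N. real (M choose r) * bernoulli_num r) / (real M)^2"
      by (simp add: sum_divide_distrib)
    also have "\<dots> = (bb M - 1) / (real M)^2" using F1'[of M N] M by simp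
    finally show "(\<Sum>r=1..N. real (M choose r) * bernoulli_num r / (real M)^2) = (bb M - 1) / (real M)^2" .
  qed
  also have "\<dots> = (\<Sum>r=1..N. bb r / (real r)^2) - H2 N"
    by (simp add: diff_divide_distrib sum_subtractf H2_def)
  finally show ?thesis .
qed

lemma key2:
  fixes s b c1 c2 h G r m :: real
  assumes rp: "r > 0" and mp: "m > 0" and ss: "s * s = 1" and cc: "(r + m) * c1 = c2 * r"
  shows "(s * b / r) * ((1 / (r + m)) * (s * (c1 * h - G)) + 1 / (r * m))
    = (1/(r+m)^2) * (b * c2 * h) - (1/(r+m)) * (b * G / r) + (1/(r+m)) * (s * b / r^2)
      + (1/(r+m)^2) * (s * b / r + s * b / m)"
proof -
  have rm: "r + m > 0" using rp mp by simp
  have c2: "c2 = (r + m) * c1 / r" using cc rp by (simp add: field_simps)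
  have "(s * b / r) * ((1 / (r + m)) * (s * (c1 * h - G)) + 1 / (r * m))
      = (s * s) * b * (c1 * h - G) / (r * (r + m)) + s * b / (r * r * m)"
    using rp mp rm by (simp add: divide_simps) (simp add: algebra_simps)
  also have "\<dots> = b * (c1 * h - G) / (r * (r + m)) + s * b / (r * r * m)"
    using ss by simp
  also have "\<dots> = (1/(r+m)^2) * (b * ((r + m) * c1 / r) * h) - (1/(r+m)) * (b * G / r) + (1/(r+m)) * (s * b / r^2)
      + (1/(r+m)^2) * (s * b / r + s * b / m)"
    using rp mp rm by (simp add: divide_simps power2_eq_square) (simp add: algebra_simps)
  finally show ?thesis unfolding c2 .
qed

lemma term_eq:
  assumes r: "r \<in> {1..N}"
  shows "((-1)^r * bernoulli_num r / real r) *
            ((1 / real (Suc N)) * (\<Sum>l=r..Suc N. (-1)^l * real (Suc N choose l) * H1 (l - 1))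
             + 1 / (real r * real (Suc N - r)))
    = (1/(real (Suc N))^2) * (bernoulli_num r * real (Suc N choose r) * H1 (r-1))
      - (1/real (Suc N)) * (bernoulli_num r * (\<Sum>M=1..N. real ((M-1) choose (r-1)) / real M) / real r)
      + (1/real (Suc N)) * (bb r / (real r)^2)
      + (1/(real (Suc N))^2) * (bb r / real r + bb r / real (Suc N - r))"
proof -
  obtain r' where r': "r = Suc r'" using r by (cases r) auto
  have n: "real (Suc N) = real r + real (Suc N - r)" using r by auto
  have e: "real (Suc N) * real (N choose r') = real (Suc N choose Suc r') * real (Suc r')"
    using Suc_times_binomial_eq[of N r'] by (metis of_nat_mult)
  have ss: "(-1::real)^r * (-1)^r = 1" by (simp flip: power_add)
  have S: "(\<Sum>l=r..Suc N. (-1)^l * real (Suc N choose l) * H1 (l - 1))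
     = (-1)^r * (real (N choose (r-1)) * H1 (r-1) - (\<Sum>M=1..N. real ((M-1) choose (r-1)) / real M))"
    using r by (intro S_closed) auto
  show ?thesis
    unfolding S bb_def n
    by (rule key2) (use r ss e n r' in auto)
qed

theorem mainTheorem1:
  fixes n :: nat
  assumes "n \<ge> 1"
  shows "(\<Sum>r=1..n-1. ((-1)^r * bernoulli_num r / real r) *
            ((1 / real n) * (\<Sum>l=r..n. (-1)^l * real (n choose l) * H1 (l - 1))
             + 1 / (real r * real (n - r))))
         = H2 (n - 1) / real n + H1 (n - 1) / (real n)^2"
proof -
  obtain N where n: "n = Suc N" using assms by (cases n) auto
  define A where "A = (\<Sum>r=1..N. bernoulli_num r * real (Suc N choose r) * H1 (r-1))"
  define G where "G = (\<Sum>r=1..N. bernoulli_num r * (\<Sum>M=1..N. real ((M-1) choose (r-1)) / real M) / real r)"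
  define R where "R = (\<Sum>r=1..N. bb r / (real r)^2)"
  define P where "P = (\<Sum>r=1..N. bb r / real r)"
  define Q where "Q = (\<Sum>r=1..N. bb r / real (Suc N - r))"
  have "(\<Sum>r=1..n-1. ((-1)^r * bernoulli_num r / real r) *
            ((1 / real n) * (\<Sum>l=r..n. (-1)^l * real (n choose l) * H1 (l - 1))
             + 1 / (real r * real (n - r))))
      = (\<Sum>r=1..N. (1/(real (Suc N))^2) * (bernoulli_num r * real (Suc N choose r) * H1 (r-1))
      - (1/real (Suc N)) * (bernoulli_num r * (\<Sum>M=1..N. real ((M-1) choose (r-1)) / real M) / real r)
      + (1/real (Suc N)) * (bb r / (real r)^2)
      + (1/(real (Suc N))^2) * (bb r / real r + bb r / real (Suc N - r)))"
    unfolding n diff_Suc_1 by (intro sum.cong refl term_eq) auto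
  also have "\<dots> = (1/(real (Suc N))^2) * A - (1/real (Suc N)) * G + (1/real (Suc N)) * R
      + (1/(real (Suc N))^2) * (P + Q)"
    unfolding A_def G_def R_def P_def Q_def
    by (simp add: sum.distrib sum_subtractf sum_distrib_left sum_divide_distrib add_divide_distrib)
  finally have eq: "(\<Sum>r=1..n-1. ((-1)^r * bernoulli_num r / real r) *
            ((1 / real n) * (\<Sum>l=r..n. (-1)^l * real (n choose l) * H1 (l - 1))
             + 1 / (real r * real (n - r))))
     = (1/(real (Suc N))^2) * A - (1/real (Suc N)) * G + (1/real (Suc N)) * R
      + (1/(real (Suc N))^2) * (P + Q)" .
  have g: "G = R - H2 N" unfolding G_def R_def by (rule Gsum)
  have s2: "P + Q = H1 N - A" using step2[of N] unfolding A_def P_def Q_def by simp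
  have fin: "(1/(real (Suc N))^2) * A - (1/real (Suc N)) * G + (1/real (Suc N)) * R
      + (1/(real (Suc N))^2) * (P + Q) = H2 N / real (Suc N) + H1 N / (real (Suc N))^2"
    unfolding g s2 by (simp add: algebra_simps diff_divide_distrib add_divide_distrib)
  show ?thesis unfolding eq using fin by (simp add: n)
qed

end
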